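(* Let $\tau>0$ and $\lambda_0\in[0,+\infty)$ with $\tau\lambda_0\le1$. Let $G(E)=\frac{E}{(1-E)^2}$, an increasing bijection from $[0,1)$ onto $[0,+\infty)$. Define $E^\tau_0=\tau\lambda_0$ and, for $k\ge0$, $E^\tau_{k+1}\in[0,1)$ as the unique solution of $G(E^\tau_{k+1})=E^\tau_k$. Then for all $k\ge0$, \[\frac1\tau E^\tau_k\le\frac{\lambda_0}{\tau k\lambda_0(2-\tau\lambda_0)+1}.\] *)

theory Defs
  imports Complex_Main
begin

definition G :: "real \<Rightarrow> real" where
  "G E = E / (1 - E)^2"

definition Ginv :: "real \<Rightarrow> real" where
  "Ginv y = (THE E. 0 \<le> E \<and> E < 1 \<and> G E = y)"

fun Eseq :: "real \<Rightarrow> real \<Rightarrow> nat \<Rightarrow> real" where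
  "Eseq \<tau> lam0 0 = \<tau> * lam0"
| "Eseq \<tau> lam0 (Suc k) = Ginv (Eseq \<tau> lam0 k)"

end

theory Submission
  imports Defs
begin

lemma G_mono_strict:
  assumes "0 \<le> x" "x < z" "z < 1"
  shows "G x < G z"
proof -
  have "(1-z)^2 < (1-x)^2" using assms by (intro power_strict_mono) auto
  moreover have "0 < (1-z)^2" using assms by simp
  ultimately have "x / (1-x)^2 \<le> x / (1-z)^2" using assms
    by (intro divide_left_mono) auto
  also have "\<dots> < z / (1-z)^2" using assms by (intro divide_strict_right_mono) auto
  finally show ?thesis unfolding G_def .
qed

lemma G_ex:
  assumes "y \<ge> 0"
  shows "\<exists>E. 0 \<le> E \<and> E < 1 \<and> G E = y"
proof -
  define b where "b = y / (1 + y)"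
  have b0: "0 \<le> b" "b < 1" using assms by (auto simp: b_def)
  have "1 - b = 1 / (1 + y)" using assms by (simp add: b_def field_simps)
  hence "b / (1 - b) = y" using assms by (simp add: b_def field_simps)
  moreover have "b / (1-b) \<le> b / (1-b)^2"
  proof -
    have "(1-b)^2 \<le> 1 - b" using b0 by (simp add: power2_eq_square mult_le_cancel_right1)
    moreover have "0 < (1-b)^2" using b0 by simp
    ultimately show ?thesis using b0 by (intro divide_left_mono) auto
  qed
  ultimately have Gb: "y \<le> G b" by (simp add: G_def)
  have G0: "G 0 \<le> y" using assms by (simp add: G_def)
  have "continuous_on {0..b} G" unfolding G_def using b0
    by (intro continuous_intros) auto
  then obtain E where "E \<in> {0..b}" "G E = y"
    using IVT'[of G 0 y b] G0 Gb b0 by auto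
  thus ?thesis using b0 by (intro exI[of _ E]) auto
qed

lemma Ginv_props:
  assumes "y \<ge> 0"
  shows "0 \<le> Ginv y \<and> Ginv y < 1 \<and> G (Ginv y) = y"
proof -
  have "\<exists>!E. 0 \<le> E \<and> E < 1 \<and> G E = y"
  proof (rule ex_ex1I)
    show "\<exists>E. 0 \<le> E \<and> E < 1 \<and> G E = y" using G_ex[OF assms] .
  next
    fix x z assume h: "0 \<le> x \<and> x < 1 \<and> G x = y" "0 \<le> z \<and> z < 1 \<and> G z = y"
    show "x = z"
    proof (rule ccontr)
      assume "x \<noteq> z"
      hence "x < z \<or> z < x" by auto
      thus False using G_mono_strict h by force
    qed
  qed
  thus ?thesis unfolding Ginv_def by (rule theI')
qed

lemma Ginv_zero: "Ginv 0 = 0"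
proof -
  have h: "0 \<le> Ginv 0 \<and> Ginv 0 < 1 \<and> G (Ginv 0) = 0" using Ginv_props by simp
  thus ?thesis by (auto simp: G_def)
qed

lemma Ginv_step:
  assumes "y > 0"
  shows "Ginv y > 0 \<and> Ginv y \<le> y \<and> 1 / Ginv y = 1 / y + 2 - Ginv y"
proof -
  define x where "x = Ginv y"
  have h: "0 \<le> x" "x < 1" "x / (1-x)^2 = y" using Ginv_props[of y] assms
    by (auto simp: x_def G_def)
  have x0: "x > 0" using h assms by (cases "x = 0") auto
  have p: "0 < (1-x)^2" using h by simp
  have "(1-x)^2 \<le> 1" using h by (intro power_le_one) auto
  hence "x / 1 \<le> x / (1-x)^2" using x0 p by (intro divide_left_mono) auto
  hence "x \<le> y" using h(3) by simp
  moreover have "1 / y = 1 / x - 2 + x"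
  proof -
    have "1 / y = (1-x)^2 / x" using h(3)[symmetric] by simp
    also have "\<dots> = 1 / x - 2 + x" using x0 by (simp add: field_simps power2_eq_square)
    finally show ?thesis .
  qed
  ultimately show ?thesis using x0 unfolding x_def by simp
qed

lemma main_ind:
  assumes a: "0 < a" "a \<le> 1" and t: "\<tau> * lam0 = a"
  shows "0 < Eseq \<tau> lam0 k \<and> Eseq \<tau> lam0 k \<le> a \<and>
         1 / Eseq \<tau> lam0 k \<ge> 1 / a + real k * (2 - a)"
  using t
proof (induction k)
  case 0
  then show ?case using a by simp
next
  case (Suc k)
  let ?y = "Eseq \<tau> lam0 k"
  have IH: "0 < ?y" "?y \<le> a" "1 / ?y \<ge> 1 / a + real k * (2 - a)" using Suc by auto
  have s: "Ginv ?y > 0 \<and> Ginv ?y \<le> ?y \<and> 1 / Ginv ?y = 1 / ?y + 2 - Ginv ?y"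
    using Ginv_step[OF IH(1)] .
  have "1 / Ginv ?y \<ge> 1 / a + real (Suc k) * (2 - a)"
    using s IH by (simp add: algebra_simps)
  thus ?case using s IH by simp
qed

theorem mainTheorem14:
  fixes \<tau> lam0 :: real and k :: nat
  assumes "\<tau> > 0" and "lam0 \<ge> 0" and "\<tau> * lam0 \<le> 1"
  shows "Eseq \<tau> lam0 k / \<tau> \<le> lam0 / (\<tau> * real k * lam0 * (2 - \<tau> * lam0) + 1)"
proof (cases "lam0 = 0")
  case True
  have "Eseq \<tau> lam0 k = 0" by (induction k) (auto simp: True Ginv_zero)
  thus ?thesis using True by simp
next
  case False
  define a where "a = \<tau> * lam0"
  have a: "0 < a" "a \<le> 1" using assms False by (auto simp: a_def)
  have m: "0 < Eseq \<tau> lam0 k" "1 / Eseq \<tau> lam0 k \<ge> 1 / a + real k * (2 - a)"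
    using main_ind[OF a, of \<tau> lam0 k] a_def by auto
  have pos: "0 < 1 / a + real k * (2 - a)" using a by (simp add: add_pos_nonneg)
  have "Eseq \<tau> lam0 k \<le> 1 / (1 / a + real k * (2 - a))"
  proof -
    have "Eseq \<tau> lam0 k * (1 / a + real k * (2 - a)) \<le> Eseq \<tau> lam0 k * (1 / Eseq \<tau> lam0 k)"
      using m by (intro mult_left_mono) auto
    hence "Eseq \<tau> lam0 k * (1 / a + real k * (2 - a)) \<le> 1" using m(1) by simp
    thus ?thesis using pos by (simp add: le_divide_eq)
  qed
  also have "\<dots> = a / (real k * a * (2 - a) + 1)" using a by (simp add: field_simps)
  finally have "Eseq \<tau> lam0 k \<le> a / (real k * a * (2 - a) + 1)" .
  hence "Eseq \<tau> lam0 k / \<tau> \<le> a / (real k * a * (2 - a) + 1) / \<tau>"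
    by (rule divide_right_mono) (use assms(1) in auto)
  also have "\<dots> = lam0 / (\<tau> * real k * lam0 * (2 - \<tau> * lam0) + 1)"
    using assms(1) by (simp add: a_def mult.assoc mult.left_commute)
  finally show ?thesis .
qed

end
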